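(* Let $a_1,a_2,a_3$ be assemblies of connected graphs on the same finite vertex set such that the components of $a_1$ and of $a_2$ are regular graphs. If $a_1$ divides $a_2$ and $a_2$ divides $a_3$, then $a_1$ divides $a_3$ and $\phi_{(a_2,a_3/a_2)}(x,t)$ divides $\phi_{(a_1,a_3/a_1)}(x,t)$ in $\mathbb R[x,t]$.
   Context: All graphs finite and simple. Identify a graph on a finite set $V$ with the assembly of its connected components. $a_1$ divides $a_2$ if there is a graph $h$ whose vertex set is the set of vertex sets $B_1,\dots,B_k$ of the components of $a_1$ with $E(a_2)=E(a_1)\cup\{\{x,y\}:x\in B,y\in B',\{B,B'\}\in E(h)\}$; then $a_2/a_1:=h$. For an assembly $a$ of regular graphs $g_1,\dots,g_k$ on blocks $B_j$ with $n_j=|B_j|$, regularities $r_j$, and a graph $h$ on $\{B_1,\dots,B_k\}$, let $N_j=\sum_{s:\{B_s,B_j\}\in E(h)}n_s$; $A(a,h)$ is the $k\times k$ matrix with diagonal $r_j$ and $(i,j)$ entry ($i\neq j$) $\sqrt{n_in_j}$ if $\{B_i,B_j\}\in E(h)$, else $0$; $D(a,h)=\mathrm{diag}(r_j+N_j)$; and $\phi_{(a,h)}(x,t)=\det\big(xI_k-(A(a,h)-tD(a,h))\big)$. *)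

theory Defs
  imports "HOL-Computational_Algebra.Polynomial" "Jordan_Normal_Form.Determinant"
begin

(* An assembly of connected graphs is identified with
   the graph which is the disjoint union of them (its connected components). *)

definition simple_graph :: "'a set \<Rightarrow> 'a set set \<Rightarrow> bool" where
  "simple_graph V E \<longleftrightarrow> finite V \<and>
     (\<forall>e\<in>E. \<exists>x y. x \<noteq> y \<and> x \<in> V \<and> y \<in> V \<and> e = {x, y})"

definition adj :: "'a set set \<Rightarrow> 'a \<Rightarrow> 'a \<Rightarrow> bool" where
  "adj E x y \<longleftrightarrow> {x, y} \<in> E"

definition components :: "'a set \<Rightarrow> 'a set set \<Rightarrow> 'a set set" where
  "components V E = {{y \<in> V. (adj E)\<^sup>*\<^sup>* x y} | x. x \<in> V}"

definition degree :: "'a set set \<Rightarrow> 'a \<Rightarrow> nat" where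
  "degree E v = card {u. {v, u} \<in> E}"

definition regular_components :: "'a set \<Rightarrow> 'a set set \<Rightarrow> bool" where
  "regular_components V E \<longleftrightarrow>
     (\<forall>B\<in>components V E. \<exists>r. \<forall>v\<in>B. degree E v = r)"

definition lift_edges :: "'a set set set \<Rightarrow> 'a set set" where
  "lift_edges H = {{x, y} | x y B B'. {B, B'} \<in> H \<and> x \<in> B \<and> y \<in> B'}"

definition divides :: "'a set \<Rightarrow> 'a set set \<Rightarrow> 'a set set \<Rightarrow> bool" where
  "divides V E1 E2 \<longleftrightarrow>
     (\<exists>H. simple_graph (components V E1) H \<and> E2 = E1 \<union> lift_edges H)"

definition quot :: "'a set \<Rightarrow> 'a set set \<Rightarrow> 'a set set \<Rightarrow> 'a set set set" where
  "quot V E1 E2 = (THE H. simple_graph (components V E1) H \<and> E2 = E1 \<union> lift_edges H)"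

definition reg :: "'a set set \<Rightarrow> 'a set \<Rightarrow> nat" where
  "reg E B = degree E (SOME v. v \<in> B)"

definition nbsize :: "'a set set \<Rightarrow> 'a set set set \<Rightarrow> 'a set \<Rightarrow> nat" where
  "nbsize Bs H B = (\<Sum>B'\<in>{B' \<in> Bs. {B', B} \<in> H}. card B')"

definition block_list :: "'a set set \<Rightarrow> 'a set list" where
  "block_list Bs = (SOME bs. distinct bs \<and> set bs = Bs)"

definition Aent :: "'a set set \<Rightarrow> 'a set set set \<Rightarrow> 'a set \<Rightarrow> 'a set \<Rightarrow> real" where
  "Aent E H Bi Bj = (if Bi = Bj then real (reg E Bi)
      else if {Bi, Bj} \<in> H then sqrt (real (card Bi) * real (card Bj)) else 0)"

definition Dent :: "'a set set \<Rightarrow> 'a set set set \<Rightarrow> 'a set set \<Rightarrow> 'a set \<Rightarrow> 'a set \<Rightarrow> real" where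
  "Dent E H Bs Bi Bj = (if Bi = Bj then real (reg E Bi + nbsize Bs H Bi) else 0)"

(* R[x,t] is represented as (R[t])[x]: outer variable x, inner variable t *)
definition varx :: "real poly poly" where "varx = [:0, 1:]"
definition vart :: "real poly poly" where "vart = [:[:0, 1:]:]"
definition cst :: "real \<Rightarrow> real poly poly" where "cst c = [:[:c:]:]"

definition phi :: "'a set \<Rightarrow> 'a set set \<Rightarrow> 'a set set set \<Rightarrow> real poly poly" where
  "phi V E H = (let Bs = components V E; bs = block_list Bs; k = length bs in
     det (mat k k (\<lambda>(i, j).
        (if i = j then varx else 0)
        - (cst (Aent E H (bs ! i) (bs ! j)) - vart * cst (Dent E H Bs (bs ! i) (bs ! j))))))"

end

theory Submission
  imports Defs
begin

lemma core_dvd: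
  fixes M1 M2 W L :: "'b :: idom mat"
  assumes M1: "M1 \<in> carrier_mat k1 k1" and M2: "M2 \<in> carrier_mat k2 k2"
    and W: "W \<in> carrier_mat k1 k2" and L: "L \<in> carrier_mat k2 k1"
    and LW: "L * W = 1\<^sub>m k2" and MW: "M1 * W = W * M2"
  shows "det M2 dvd det M1"
proof -
  define P where "P = W * L"
  define Q where "Q = 1\<^sub>m k1 - P"
  have P: "P \<in> carrier_mat k1 k1" unfolding P_def using W L by auto
  have Q: "Q \<in> carrier_mat k1 k1" unfolding Q_def using P by auto
  have PW: "P * W = W"
  proof -
    have "P * W = W * (L * W)" unfolding P_def using assoc_mult_mat[OF W L W] .
    also have "\<dots> = W" unfolding LW using W by simp
    finally show ?thesis .
  qed
  have LP: "L * P = L"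
  proof -
    have "L * P = (L * W) * L" unfolding P_def using assoc_mult_mat[OF L W L] by simp
    also have "\<dots> = L" unfolding LW using L by simp
    finally show ?thesis .
  qed
  have PP: "P * P = P"
  proof -
    have "P * (W * L) = (P * W) * L" by (rule assoc_mult_mat[OF P W L, symmetric])
    thus ?thesis unfolding PW P_def[symmetric] .
  qed
  have QW: "Q * W = 0\<^sub>m k1 k2"
  proof -
    have "Q * W = 1\<^sub>m k1 * W - P * W" unfolding Q_def using minus_mult_distrib_mat[OF one_carrier_mat P W] .
    thus ?thesis unfolding PW using W by simp
  qed
  have LQ: "L * Q = 0\<^sub>m k2 k1"
  proof -
    have "L * Q = L * 1\<^sub>m k1 - L * P" unfolding Q_def using mult_minus_distrib_mat[OF L one_carrier_mat P] .
    thus ?thesis unfolding LP using L by simp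
  qed
  have QP: "Q * P = 0\<^sub>m k1 k1"
  proof -
    have "Q * P = 1\<^sub>m k1 * P - P * P" unfolding Q_def using minus_mult_distrib_mat[OF one_carrier_mat P P] .
    thus ?thesis unfolding PP using P by simp
  qed
  have QQ: "Q * Q = Q"
  proof -
    have "Q * Q = 1\<^sub>m k1 * Q - P * Q" unfolding Q_def[of] using minus_mult_distrib_mat[OF one_carrier_mat P Q] 
      by (simp add: Q_def)
    also have "P * Q = P * 1\<^sub>m k1 - P * P" unfolding Q_def using mult_minus_distrib_mat[OF P one_carrier_mat P] .
    also have "\<dots> = 0\<^sub>m k1 k1" unfolding PP using P by simp
    finally show ?thesis using Q by (intro eq_matI, auto)
  qed
  have PQ1: "P + Q = 1\<^sub>m k1" unfolding Q_def using P
    by (intro eq_matI, auto)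
  define X where "X = L * M1 * Q"
  define Y where "Y = Q * M1 * Q + P"
  have X: "X \<in> carrier_mat k2 k1" unfolding X_def using L M1 Q by auto
  have Y: "Y \<in> carrier_mat k1 k1" unfolding Y_def using P M1 Q by auto
  define S where "S = four_block_mat W Q (0\<^sub>m k2 k2) L"
  define Si where "Si = four_block_mat L (0\<^sub>m k2 k2) Q W"
  define Dg where "Dg = four_block_mat M1 (0\<^sub>m k1 k2) (0\<^sub>m k2 k1) (1\<^sub>m k2)"
  define T where "T = four_block_mat M2 X (0\<^sub>m k1 k2) Y"
  have Sc: "S \<in> carrier_mat (k1+k2) (k2+k1)" unfolding S_def using W L by auto
  have Sic: "Si \<in> carrier_mat (k2+k1) (k1+k2)" unfolding Si_def using W L by auto
  have Dc: "Dg \<in> carrier_mat (k1+k2) (k1+k2)" unfolding Dg_def using M1 by auto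
  have Tc: "T \<in> carrier_mat (k2+k1) (k2+k1)" unfolding T_def using M2 Y by auto
  have DS: "Dg * S = four_block_mat (M1 * W + 0\<^sub>m k1 k2 * 0\<^sub>m k2 k2) (M1 * Q + 0\<^sub>m k1 k2 * L)
        (0\<^sub>m k2 k1 * W + 1\<^sub>m k2 * 0\<^sub>m k2 k2) (0\<^sub>m k2 k1 * Q + 1\<^sub>m k2 * L)"
    unfolding Dg_def S_def
    by (rule mult_four_block_mat[OF M1 zero_carrier_mat zero_carrier_mat one_carrier_mat W Q zero_carrier_mat L])
  have DS': "Dg * S = four_block_mat (M1 * W) (M1 * Q) (0\<^sub>m k2 k2) L"
    unfolding DS using M1 W Q L by simp
  have ST: "S * T = four_block_mat (W * M2 + Q * 0\<^sub>m k1 k2) (W * X + Q * Y)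
       (0\<^sub>m k2 k2 * M2 + L * 0\<^sub>m k1 k2) (0\<^sub>m k2 k2 * X + L * Y)"
    unfolding T_def S_def
    by (rule mult_four_block_mat[OF W Q zero_carrier_mat L M2 X zero_carrier_mat Y])
  have e1: "L * Y = L"
  proof -
    have "L * Y = L * (Q * M1 * Q) + L * P" unfolding Y_def
      using mult_add_distrib_mat[of L k2 k1 "Q * M1 * Q" k1 P] L Q M1 P by auto
    also have "L * (Q * M1 * Q) = 0\<^sub>m k2 k1"
    proof -
      have M1Q: "M1 * Q \<in> carrier_mat k1 k1" using M1 Q by auto
      have "L * (Q * M1 * Q) = L * (Q * (M1 * Q))" using assoc_mult_mat[OF Q M1 Q] by simp
      also have "\<dots> = (L * Q) * (M1 * Q)" using assoc_mult_mat[OF L Q M1Q] by simp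
      finally show ?thesis unfolding LQ using left_mult_zero_mat[OF M1Q] by simp
    qed
    finally show ?thesis unfolding LP using L by simp
  qed
  have e2: "W * X + Q * Y = M1 * Q"
  proof -
    have a: "W * X = P * (M1 * Q)"
    proof -
      have M1Q: "M1 * Q \<in> carrier_mat k1 k1" using M1 Q by auto
      have "W * X = W * (L * (M1 * Q))" unfolding X_def using assoc_mult_mat[OF L M1 Q] by simp
      also have "\<dots> = P * (M1 * Q)" unfolding P_def using assoc_mult_mat[OF W L M1Q] by simp
      finally show ?thesis .
    qed
    have "Q * Y = Q * (Q * M1 * Q) + Q * P" unfolding Y_def
      using mult_add_distrib_mat[of Q k1 k1 "Q * M1 * Q" k1 P] Q M1 P by auto
    also have "Q * (Q * M1 * Q) = (Q * Q) * (M1 * Q)"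
    proof -
      have M1Q: "M1 * Q \<in> carrier_mat k1 k1" using M1 Q by auto
      have "Q * (Q * M1 * Q) = Q * (Q * (M1 * Q))" using assoc_mult_mat[OF Q M1 Q] by simp
      also have "\<dots> = (Q * Q) * (M1 * Q)" using assoc_mult_mat[OF Q Q M1Q] by simp
      finally show ?thesis .
    qed
    finally have b: "Q * Y = Q * (M1 * Q)" unfolding QQ QP using Q M1 by simp
    have "W * X + Q * Y = (P + Q) * (M1 * Q)" unfolding a b
      using add_mult_distrib_mat[of P k1 k1 Q "M1 * Q" k1] P Q M1 by auto
    thus ?thesis unfolding PQ1 using M1 Q by simp
  qed
  have ST': "S * T = four_block_mat (W * M2) (M1 * Q) (0\<^sub>m k2 k2) L"
    unfolding ST e1 e2 using W M2 Q L X by simp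
  have DSST: "Dg * S = S * T" unfolding DS' ST' MW ..
  have SiS: "Si * S = 1\<^sub>m (k2 + k1)"
  proof -
    have "Si * S = four_block_mat (L * W + 0\<^sub>m k2 k2 * 0\<^sub>m k2 k2) (L * Q + 0\<^sub>m k2 k2 * L)
       (Q * W + W * 0\<^sub>m k2 k2) (Q * Q + W * L)"
      unfolding Si_def S_def
      by (rule mult_four_block_mat[OF L zero_carrier_mat Q W W Q zero_carrier_mat L])
    also have "\<dots> = four_block_mat (1\<^sub>m k2) (0\<^sub>m k2 k1) (0\<^sub>m k1 k2) (1\<^sub>m k1)"
      unfolding LW LQ QW QQ P_def[symmetric] using L W Q P
      by (simp add: comm_add_mat[OF Q P] PQ1)
    finally show ?thesis by simp
  qed
  have Sc': "S \<in> carrier_mat (k2+k1) (k2+k1)" using Sc by (simp add: add.commute)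
  have Sic': "Si \<in> carrier_mat (k2+k1) (k2+k1)" using Sic by (simp add: add.commute)
  have Dc': "Dg \<in> carrier_mat (k2+k1) (k2+k1)" using Dc by (simp add: add.commute)
  have "det T = det (Si * S * T)" unfolding SiS using Tc by simp
  also have "\<dots> = det (Si * (Dg * S))" unfolding DSST using assoc_mult_mat[OF Sic' Sc' Tc] by simp
  also have "\<dots> = det Si * (det Dg * det S)"
    using Sic' Dc' Sc' by (simp add: det_mult[of _ "k2+k1"])
  also have "\<dots> = det Dg * (det Si * det S)" by (simp add: algebra_simps)
  also have "det Si * det S = 1" using det_mult[OF Sic' Sc'] unfolding SiS by simp
  also have "det Dg = det M1 * det (1\<^sub>m k2)" unfolding Dg_def
    by (rule det_four_block_mat_lower_left_zero[OF M1], auto)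
  finally have "det M1 = det M2 * det Y"
    unfolding T_def using det_four_block_mat_lower_left_zero[OF M2 X _ Y] by simp
  thus ?thesis by simp
qed

lemma cst_add: "cst (a + b) = cst a + cst b" by (simp add: cst_def)
lemma cst_mult: "cst (a * b) = cst a * cst b" by (simp add: cst_def)
lemma cst_0: "cst 0 = 0" by (simp add: cst_def)
lemma cst_1: "cst 1 = 1" by (simp add: cst_def one_pCons)

lemma cst_hom: "semiring_hom cst"
  by (unfold_locales, auto simp: cst_add cst_mult cst_0 cst_1)

lemma cst_sum: "cst (sum f S) = (\<Sum>x\<in>S. cst (f x))"
  by (induct S rule: infinite_finite_induct, auto simp: cst_0 cst_add)

definition CM :: "nat \<Rightarrow> real mat \<Rightarrow> real mat \<Rightarrow> real poly poly mat" where
  "CM k A D = mat k k (\<lambda>(i, j). (if i = j then varx else 0)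
        - (cst (A $$ (i, j)) - vart * cst (D $$ (i, j))))"

lemma CM_carrier: "CM k A D \<in> carrier_mat k k" by (simp add: CM_def)

lemma CM_intertwine:
  assumes A1: "A1 \<in> carrier_mat k1 k1" and D1: "D1 \<in> carrier_mat k1 k1"
    and A2: "A2 \<in> carrier_mat k2 k2" and D2: "D2 \<in> carrier_mat k2 k2"
    and W: "W \<in> carrier_mat k1 k2"
    and AW: "A1 * W = W * A2" and DW: "D1 * W = W * D2"
  shows "CM k1 A1 D1 * map_mat cst W = map_mat cst W * CM k2 A2 D2"
proof (rule eq_matI)
  show "dim_row (CM k1 A1 D1 * map_mat cst W) = dim_row (map_mat cst W * CM k2 A2 D2)"
    using W by (simp add: CM_def)
  show "dim_col (CM k1 A1 D1 * map_mat cst W) = dim_col (map_mat cst W * CM k2 A2 D2)"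
    using W by (simp add: CM_def)
  fix i j assume i: "i < dim_row (map_mat cst W * CM k2 A2 D2)"
    and j: "j < dim_col (map_mat cst W * CM k2 A2 D2)"
  hence i: "i < k1" and j: "j < k2" using W by (auto simp: CM_def)
  have ea: "(\<Sum>l<k1. A1 $$ (i, l) * W $$ (l, j)) = (\<Sum>l<k2. W $$ (i, l) * A2 $$ (l, j))"
  proof -
    have "(A1 * W) $$ (i, j) = (W * A2) $$ (i, j)" using AW by simp
    thus ?thesis using A1 A2 W i j
      by (simp add: scalar_prod_def lessThan_atLeast0)
  qed
  have ed: "(\<Sum>l<k1. D1 $$ (i, l) * W $$ (l, j)) = (\<Sum>l<k2. W $$ (i, l) * D2 $$ (l, j))"
  proof -
    have "(D1 * W) $$ (i, j) = (W * D2) $$ (i, j)" using DW by simp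
    thus ?thesis using D1 D2 W i j
      by (simp add: scalar_prod_def lessThan_atLeast0)
  qed
  have "(CM k1 A1 D1 * map_mat cst W) $$ (i, j) =
      (\<Sum>l<k1. ((if i = l then varx else 0) - (cst (A1 $$ (i, l)) - vart * cst (D1 $$ (i, l))))
         * cst (W $$ (l, j)))"
    using W i j by (simp add: CM_def scalar_prod_def lessThan_atLeast0)
  also have "\<dots> = (\<Sum>l<k1. (if i = l then varx * cst (W $$ (l, j)) else 0))
       - cst (\<Sum>l<k1. A1 $$ (i, l) * W $$ (l, j)) + vart * cst (\<Sum>l<k1. D1 $$ (i, l) * W $$ (l, j))"
  proof -
    have "\<And>l. ((if i = l then varx else 0) - (cst (A1 $$ (i, l)) - vart * cst (D1 $$ (i, l))))
         * cst (W $$ (l, j)) = ((if i = l then varx * cst (W $$ (l, j)) else 0)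
          - cst (A1 $$ (i, l) * W $$ (l, j))) + vart * cst (D1 $$ (i, l) * W $$ (l, j))"
      by (simp add: cst_mult algebra_simps)
    hence "(\<Sum>l<k1. ((if i = l then varx else 0) - (cst (A1 $$ (i, l)) - vart * cst (D1 $$ (i, l))))
         * cst (W $$ (l, j))) = (\<Sum>l<k1. ((if i = l then varx * cst (W $$ (l, j)) else 0)
          - cst (A1 $$ (i, l) * W $$ (l, j))) + vart * cst (D1 $$ (i, l) * W $$ (l, j)))"
      by (intro sum.cong, auto)
    thus ?thesis by (simp only: sum.distrib sum_subtractf cst_sum sum_distrib_left)
  qed
  also have "(\<Sum>l<k1. (if i = l then varx * cst (W $$ (l, j)) else 0)) = varx * cst (W $$ (i, j))"
    using i by simp
  finally have L: "(CM k1 A1 D1 * map_mat cst W) $$ (i, j) = varx * cst (W $$ (i, j))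
       - cst (\<Sum>l<k1. A1 $$ (i, l) * W $$ (l, j)) + vart * cst (\<Sum>l<k1. D1 $$ (i, l) * W $$ (l, j))" .
  have "(map_mat cst W * CM k2 A2 D2) $$ (i, j) =
      (\<Sum>l<k2. cst (W $$ (i, l)) * ((if l = j then varx else 0) - (cst (A2 $$ (l, j)) - vart * cst (D2 $$ (l, j)))))"
    using W i j by (simp add: CM_def scalar_prod_def lessThan_atLeast0)
  also have "\<dots> = (\<Sum>l<k2. (if l = j then varx * cst (W $$ (i, l)) else 0))
       - cst (\<Sum>l<k2. W $$ (i, l) * A2 $$ (l, j)) + vart * cst (\<Sum>l<k2. W $$ (i, l) * D2 $$ (l, j))"
  proof -
    have "\<And>l. cst (W $$ (i, l)) * ((if l = j then varx else 0) - (cst (A2 $$ (l, j)) - vart * cst (D2 $$ (l, j))))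
         = ((if l = j then varx * cst (W $$ (i, l)) else 0)
          - cst (W $$ (i, l) * A2 $$ (l, j))) + vart * cst (W $$ (i, l) * D2 $$ (l, j))"
      by (simp add: cst_mult algebra_simps)
    hence "(\<Sum>l<k2. cst (W $$ (i, l)) * ((if l = j then varx else 0) - (cst (A2 $$ (l, j)) - vart * cst (D2 $$ (l, j)))))
         = (\<Sum>l<k2. ((if l = j then varx * cst (W $$ (i, l)) else 0)
          - cst (W $$ (i, l) * A2 $$ (l, j))) + vart * cst (W $$ (i, l) * D2 $$ (l, j)))"
      by (intro sum.cong, auto)
    thus ?thesis by (simp only: sum.distrib sum_subtractf cst_sum sum_distrib_left)
  qed
  also have "(\<Sum>l<k2. (if l = j then varx * cst (W $$ (i, l)) else 0)) = varx * cst (W $$ (i, j))"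
    using j by simp
  finally show "(CM k1 A1 D1 * map_mat cst W) $$ (i, j) = (map_mat cst W * CM k2 A2 D2) $$ (i, j)"
    unfolding L ea ed by simp
qed

lemma adj_sym: "adj E x y = adj E y x"
  by (simp add: adj_def insert_commute)

lemma rtc_sym: "(adj E)\<^sup>*\<^sup>* x y \<Longrightarrow> (adj E)\<^sup>*\<^sup>* y x"
proof (induction rule: rtranclp_induct)
  case base then show ?case by simp
next
  case (step y z)
  then show ?case using adj_sym[of E y z]
    by (metis converse_rtranclp_into_rtranclp)
qed

lemma sg_edge: "simple_graph V E \<Longrightarrow> {x, y} \<in> E \<Longrightarrow> x \<in> V \<and> y \<in> V \<and> x \<noteq> y"
  unfolding simple_graph_def
  by (metis doubleton_eq_iff)

lemma sg_finite: "simple_graph V E \<Longrightarrow> finite V"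
  unfolding simple_graph_def by simp

lemma comp_mem: "B \<in> components V E \<Longrightarrow> x \<in> B \<Longrightarrow> B = {y \<in> V. (adj E)\<^sup>*\<^sup>* x y}"
proof -
  assume B: "B \<in> components V E" and x: "x \<in> B"
  then obtain z where z: "z \<in> V" and Bz: "B = {y \<in> V. (adj E)\<^sup>*\<^sup>* z y}"
    unfolding components_def by auto
  with x have zx: "(adj E)\<^sup>*\<^sup>* z x" by auto
  show ?thesis unfolding Bz
    using zx rtc_sym[OF zx] by (auto intro: rtranclp_trans)
qed

lemma comp_of: "x \<in> V \<Longrightarrow> {y \<in> V. (adj E)\<^sup>*\<^sup>* x y} \<in> components V E"
  unfolding components_def by auto

lemma comp_self: "x \<in> V \<Longrightarrow> x \<in> {y \<in> V. (adj E)\<^sup>*\<^sup>* x y}"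
  by auto

lemma comp_sub: "B \<in> components V E \<Longrightarrow> B \<subseteq> V"
  unfolding components_def by auto

lemma comp_ne: "B \<in> components V E \<Longrightarrow> B \<noteq> {}"
  unfolding components_def by auto

lemma comp_uniq: "B \<in> components V E \<Longrightarrow> B' \<in> components V E \<Longrightarrow> x \<in> B \<Longrightarrow> x \<in> B' \<Longrightarrow> B = B'"
proof -
  assume a: "B \<in> components V E" "B' \<in> components V E" "x \<in> B" "x \<in> B'"
  show ?thesis using comp_mem[OF a(1,3)] comp_mem[OF a(2,4)] by simp
qed

lemma comp_disj: "B \<in> components V E \<Longrightarrow> B' \<in> components V E \<Longrightarrow> B \<noteq> B' \<Longrightarrow> B \<inter> B' = {}"
proof -
  assume a: "B \<in> components V E" "B' \<in> components V E" "B \<noteq> B'"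
  { fix x assume "x \<in> B" "x \<in> B'"
    hence False using comp_uniq[OF a(1,2)] a(3) by blast }
  thus ?thesis by blast
qed

lemma pw_comp: "F \<subseteq> components V E \<Longrightarrow> pairwise disjnt F"
  unfolding pairwise_def disjnt_def
proof (intro ballI impI)
  fix x y assume "F \<subseteq> components V E" "x \<in> F" "y \<in> F" "x \<noteq> y"
  thus "x \<inter> y = {}" using comp_disj[of x V E y] by blast
qed

lemma comp_finite: "simple_graph V E \<Longrightarrow> finite (components V E)"
proof -
  assume "simple_graph V E"
  hence "finite V" by (rule sg_finite)
  moreover have "components V E \<subseteq> Pow V" using comp_sub by auto
  ultimately show ?thesis by (meson finite_Pow_iff rev_finite_subset)
qed

lemma comp_finite_block: "simple_graph V E \<Longrightarrow> B \<in> components V E \<Longrightarrow> finite B"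
  using comp_sub sg_finite finite_subset by metis

lemma comp_exists: "x \<in> V \<Longrightarrow> \<exists>B \<in> components V E. x \<in> B"
  using comp_of comp_self by metis

lemma comp_edge: "simple_graph V E \<Longrightarrow> {x, y} \<in> E \<Longrightarrow> B \<in> components V E \<Longrightarrow> x \<in> B \<Longrightarrow> y \<in> B"
proof -
  assume sg: "simple_graph V E" and e: "{x, y} \<in> E" and B: "B \<in> components V E" and x: "x \<in> B"
  have y: "y \<in> V" using sg_edge[OF sg e] by simp
  have "adj E x y" using e by (simp add: adj_def)
  thus ?thesis using comp_mem[OF B x] y by auto
qed

lemma sgH: "simple_graph C H \<Longrightarrow> {B, B'} \<in> H \<Longrightarrow> B \<in> C \<and> B' \<in> C \<and> B \<noteq> B'"
  by (rule sg_edge)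

lemma lift_mem:
  assumes H: "simple_graph (components V E) H" and B: "B \<in> components V E" and v: "v \<in> B"
  shows "{v, u} \<in> lift_edges H \<longleftrightarrow> (\<exists>B' \<in> components V E. {B', B} \<in> H \<and> u \<in> B')"
proof
  assume "{v, u} \<in> lift_edges H"
  then obtain x y B1 B2 where e: "{v, u} = {x, y}" and h: "{B1, B2} \<in> H" and x: "x \<in> B1" and y: "y \<in> B2"
    unfolding lift_edges_def by blast
  have B1: "B1 \<in> components V E" and B2: "B2 \<in> components V E" using sgH[OF H h] by auto
  from e have "(v = x \<and> u = y) \<or> (v = y \<and> u = x)" by (simp add: doubleton_eq_iff)
  thus "\<exists>B' \<in> components V E. {B', B} \<in> H \<and> u \<in> B'"
  proof
    assume a: "v = x \<and> u = y"
    hence "B1 = B" using comp_uniq[OF B1 B] x v by auto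
    thus ?thesis using B2 h y a by (auto simp: insert_commute)
  next
    assume a: "v = y \<and> u = x"
    hence "B2 = B" using comp_uniq[OF B2 B] y v by auto
    thus ?thesis using B1 h x a by auto
  qed
next
  assume "\<exists>B' \<in> components V E. {B', B} \<in> H \<and> u \<in> B'"
  then obtain B' where "{B', B} \<in> H" "u \<in> B'" by auto
  thus "{v, u} \<in> lift_edges H" unfolding lift_edges_def using v
    by (auto simp: insert_commute)
qed

lemma deg_lift:
  assumes sg: "simple_graph V E" and H: "simple_graph (components V E) H"
    and B: "B \<in> components V E" and v: "v \<in> B"
  shows "degree (E \<union> lift_edges H) v = degree E v + nbsize (components V E) H B"
proof -
  let ?C = "components V E"
  let ?F = "{B' \<in> ?C. {B', B} \<in> H}"
  have eq: "{u. {v, u} \<in> E \<union> lift_edges H} = {u. {v, u} \<in> E} \<union> \<Union>?F"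
    using lift_mem[OF H B v] by auto
  have f1: "finite {u. {v, u} \<in> E}"
  proof -
    have "{u. {v, u} \<in> E} \<subseteq> V" using sg_edge[OF sg] by auto
    thus ?thesis using sg_finite[OF sg] finite_subset by auto
  qed
  have fF: "finite ?F" using comp_finite[OF sg] by auto
  have fB: "\<And>A. A \<in> ?F \<Longrightarrow> finite A" using comp_finite_block[OF sg] by auto
  have f2: "finite (\<Union>?F)" using fF fB by auto
  have disj: "{u. {v, u} \<in> E} \<inter> \<Union>?F = {}"
  proof -
    { fix u B' assume e: "{v, u} \<in> E" and B': "B' \<in> ?F" and u: "u \<in> B'"
      have "u \<in> B" using comp_edge[OF sg e B v] .
      moreover have "B' \<noteq> B" using B' sgH[OF H] by auto
      ultimately have False using comp_uniq[OF _ B] B' u by auto }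
    thus ?thesis by blast
  qed
  have pw: "pairwise disjnt ?F"
    by (rule pw_comp[of _ V E], auto)
  have "degree (E \<union> lift_edges H) v = card ({u. {v, u} \<in> E} \<union> \<Union>?F)"
    unfolding degree_def eq ..
  also have "\<dots> = card {u. {v, u} \<in> E} + card (\<Union>?F)"
    by (rule card_Un_disjoint[OF f1 f2 disj])
  also have "card (\<Union>?F) = sum card ?F" by (rule card_Union_disjoint[OF pw fB])
  finally have "degree (E \<union> lift_edges H) v = card {u. {v, u} \<in> E} + sum card ?F" .
  thus ?thesis unfolding nbsize_def degree_def[of E v, symmetric] .
qed

lemma lift_uniq:
  assumes sg: "simple_graph V E" and H: "simple_graph (components V E) H"
    and H': "simple_graph (components V E) H'" and eq: "E \<union> lift_edges H = E \<union> lift_edges H'"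
  shows "H \<subseteq> H'"
proof
  fix e assume e: "e \<in> H"
  have "\<exists>x y. x \<noteq> y \<and> x \<in> components V E \<and> y \<in> components V E \<and> e = {x, y}"
    using H e unfolding simple_graph_def by auto
  then obtain B B' where eB: "e = {B, B'}" and BB: "B \<noteq> B'" "B \<in> components V E" "B' \<in> components V E"
    by auto
  obtain x where x: "x \<in> B" using comp_ne[OF BB(2)] by auto
  obtain y where y: "y \<in> B'" using comp_ne[OF BB(3)] by auto
  have "{x, y} \<in> lift_edges H" unfolding lift_edges_def using e eB x y by blast
  hence "{x, y} \<in> E \<union> lift_edges H'" using eq by auto
  moreover have "{x, y} \<notin> E"
  proof
    assume "{x, y} \<in> E"
    hence "y \<in> B" using comp_edge[OF sg _ BB(2) x] by auto
    thus False using comp_uniq[OF BB(2) BB(3) _ y] BB(1) by auto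
  qed
  ultimately have "{x, y} \<in> lift_edges H'" by auto
  then obtain B'' where B'': "B'' \<in> components V E" "{B'', B} \<in> H'" "y \<in> B''"
    using lift_mem[OF H' BB(2) x] by auto
  have "B'' = B'" using comp_uniq[OF B''(1) BB(3) B''(3) y] .
  thus "e \<in> H'" using B''(2) eB by (auto simp: insert_commute)
qed

lemma quot_eq:
  assumes sg: "simple_graph V E" and H: "simple_graph (components V E) H"
  shows "quot V E (E \<union> lift_edges H) = H"
  unfolding quot_def
proof (rule the_equality)
  show "simple_graph (components V E) H \<and> E \<union> lift_edges H = E \<union> lift_edges H" using H by simp
  fix H' assume a: "simple_graph (components V E) H' \<and> E \<union> lift_edges H = E \<union> lift_edges H'"
  show "H' = H"
    using lift_uniq[OF sg H _ ] lift_uniq[OF sg _ H] a by blast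
qed

lemma refine_ex:
  assumes sub: "E1 \<subseteq> E2" and B: "B \<in> components V E1"
  shows "\<exists>J \<in> components V E2. B \<subseteq> J"
proof -
  obtain x where x: "x \<in> B" using comp_ne[OF B] by auto
  have xV: "x \<in> V" using comp_sub[OF B] x by auto
  have mono: "(adj E1)\<^sup>*\<^sup>* \<le> (adj E2)\<^sup>*\<^sup>*"
    by (rule rtranclp_mono, insert sub, auto simp: adj_def)
  have s1: "B \<subseteq> {y \<in> V. (adj E2)\<^sup>*\<^sup>* x y}"
  proof
    fix y assume "y \<in> B"
    hence "y \<in> V \<and> (adj E1)\<^sup>*\<^sup>* x y" using comp_mem[OF B x] by auto
    thus "y \<in> {y \<in> V. (adj E2)\<^sup>*\<^sup>* x y}" using mono by (auto simp: le_fun_def)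
  qed
  have s2: "{y \<in> V. (adj E2)\<^sup>*\<^sup>* x y} \<in> components V E2" by (rule comp_of[OF xV])
  show ?thesis by (rule bexI[of "\<lambda>J. B \<subseteq> J", OF s1 s2])
qed

lemma refine_uniq:
  assumes B: "B \<in> components V E1" and J: "J \<in> components V E2" and J': "J' \<in> components V E2"
    and "B \<subseteq> J" "B \<subseteq> J'"
  shows "J = J'"
proof -
  obtain x where x: "x \<in> B" using comp_ne[OF B] by auto
  have xJ: "x \<in> J" using x assms(4) by auto
  have xJ': "x \<in> J'" using x assms(5) by auto
  show ?thesis by (rule comp_uniq[OF J J' xJ xJ'])
qed

lemma refine_union:
  assumes sub: "E1 \<subseteq> E2" and J: "J \<in> components V E2"
  shows "J = \<Union>{B \<in> components V E1. B \<subseteq> J}"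
proof
  show "J \<subseteq> \<Union>{B \<in> components V E1. B \<subseteq> J}"
  proof
    fix x assume x: "x \<in> J"
    have xV: "x \<in> V" using comp_sub[OF J] x by auto
    let ?B = "{y \<in> V. (adj E1)\<^sup>*\<^sup>* x y}"
    have B: "?B \<in> components V E1" by (rule comp_of[OF xV])
    obtain J' where J': "J' \<in> components V E2" "?B \<subseteq> J'" using refine_ex[OF sub B] by auto
    have "x \<in> J'" using J'(2) comp_self[OF xV] by auto
    hence "J' = J" by (rule comp_uniq[OF J'(1) J _ x])
    hence "?B \<in> {B \<in> components V E1. B \<subseteq> J}" using B J'(2) by simp
    thus "x \<in> \<Union>{B \<in> components V E1. B \<subseteq> J}" using comp_self[OF xV] by (rule UnionI)
  qed
qed auto

lemma refine_card:
  assumes sg1: "simple_graph V E1" and sub: "E1 \<subseteq> E2" and J: "J \<in> components V E2"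
  shows "(\<Sum>B\<in>{B \<in> components V E1. B \<subseteq> J}. card B) = card J"
proof -
  let ?F = "{B \<in> components V E1. B \<subseteq> J}"
  have pw: "pairwise disjnt ?F"
    by (rule pw_comp[of _ V E1], auto)
  have fB: "\<And>A. A \<in> ?F \<Longrightarrow> finite A" using comp_finite_block[OF sg1] by auto
  have "card J = card (\<Union>?F)" using refine_union[OF sub J] by simp
  also have "\<dots> = sum card ?F" by (rule card_Union_disjoint[OF pw fB])
  finally show ?thesis by simp
qed

locale asm3 =
  fixes V :: "'a set" and E1 E2 E3 :: "'a set set" and H12 H23 :: "'a set set set"
  assumes sg1: "simple_graph V E1" and sg2: "simple_graph V E2" and sg3: "simple_graph V E3"
    and rc1: "regular_components V E1" and rc2: "regular_components V E2"
    and H12: "simple_graph (components V E1) H12" and e2: "E2 = E1 \<union> lift_edges H12"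
    and H23: "simple_graph (components V E2) H23" and e3: "E3 = E2 \<union> lift_edges H23"
begin

abbreviation "C1 \<equiv> components V E1"
abbreviation "C2 \<equiv> components V E2"

definition blk :: "'a set \<Rightarrow> 'a set" where
  "blk B = (SOME J. J \<in> C2 \<and> B \<subseteq> J)"

lemma sub12: "E1 \<subseteq> E2" using e2 by auto

lemma blk: "B \<in> C1 \<Longrightarrow> blk B \<in> C2 \<and> B \<subseteq> blk B"
proof -
  assume B: "B \<in> C1"
  have "\<exists>J. J \<in> C2 \<and> B \<subseteq> J" using refine_ex[OF sub12 B] by auto
  thus ?thesis unfolding blk_def by (rule someI_ex)
qed

lemma blk_eq: "B \<in> C1 \<Longrightarrow> J \<in> C2 \<Longrightarrow> B \<subseteq> J \<Longrightarrow> blk B = J"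
  using refine_uniq blk by metis

lemma H12_blk:
  assumes h: "{B, B'} \<in> H12"
  shows "blk B = blk B'"
proof -
  have BB: "B \<in> C1" "B' \<in> C1" "B \<noteq> B'" using sgH[OF H12 h] by auto
  obtain x where x: "x \<in> B" using comp_ne[OF BB(1)] by auto
  obtain y where y: "y \<in> B'" using comp_ne[OF BB(2)] by auto
  have "{x, y} \<in> lift_edges H12" unfolding lift_edges_def using h x y by blast
  hence "{x, y} \<in> E2" using e2 by auto
  moreover have "x \<in> blk B" using blk[OF BB(1)] x by auto
  ultimately have "y \<in> blk B" using comp_edge[OF sg2 _ conjunct1[OF blk[OF BB(1)]]] by blast
  moreover have "y \<in> blk B'" using blk[OF BB(2)] y by auto
  ultimately show ?thesis using comp_uniq[OF conjunct1[OF blk[OF BB(1)]] conjunct1[OF blk[OF BB(2)]]] by blast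
qed

definition H13 :: "'a set set set" where
  "H13 = H12 \<union> {{B, B'} | B B'. B \<in> C1 \<and> B' \<in> C1 \<and> {blk B, blk B'} \<in> H23}"

lemma H13_simple: "simple_graph C1 H13"
  unfolding simple_graph_def
proof (intro conjI ballI)
  show "finite C1" by (rule comp_finite[OF sg1])
  fix e assume e: "e \<in> H13"
  show "\<exists>x y. x \<noteq> y \<and> x \<in> C1 \<and> y \<in> C1 \<and> e = {x, y}"
  proof (cases "e \<in> H12")
    case True
    then show ?thesis using H12 unfolding simple_graph_def by auto
  next
    case False
    then obtain B B' where eB: "e = {B, B'}" "B \<in> C1" "B' \<in> C1" "{blk B, blk B'} \<in> H23"
      using e unfolding H13_def by blast
    have "blk B \<noteq> blk B'" using sgH[OF H23 eB(4)] by auto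
    hence "B \<noteq> B'" by auto
    thus ?thesis using eB by blast
  qed
qed

lemma H13_iff:
  assumes B: "B \<in> C1" and B': "B' \<in> C1"
  shows "{B, B'} \<in> H13 \<longleftrightarrow> {B, B'} \<in> H12 \<or> {blk B, blk B'} \<in> H23"
proof
  assume "{B, B'} \<in> H13"
  moreover
  { fix X Y assume eq: "{B, B'} = {X, Y}" and h: "{blk X, blk Y} \<in> H23"
    from eq have "(B = X \<and> B' = Y) \<or> (B = Y \<and> B' = X)" by (simp add: doubleton_eq_iff)
    hence "{blk B, blk B'} \<in> H23" using h by (auto simp: insert_commute) }
  ultimately show "{B, B'} \<in> H12 \<or> {blk B, blk B'} \<in> H23"
    unfolding H13_def by blast
next
  assume "{B, B'} \<in> H12 \<or> {blk B, blk B'} \<in> H23"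
  thus "{B, B'} \<in> H13" unfolding H13_def using B B' by blast
qed

lemma lift_edgesE:
  assumes "e \<in> lift_edges H"
  obtains x y X Y where "e = {x, y}" "{X, Y} \<in> H" "x \<in> X" "y \<in> Y"
  using assms unfolding lift_edges_def by auto

lemma lift_edgesI: "{X, Y} \<in> H \<Longrightarrow> x \<in> X \<Longrightarrow> y \<in> Y \<Longrightarrow> {x, y} \<in> lift_edges H"
  unfolding lift_edges_def by auto

lemma lift_Un: "lift_edges (A \<union> B) = lift_edges A \<union> lift_edges B"
  unfolding lift_edges_def by blast

lemma lift_H13': "lift_edges {{B, B'} | B B'. B \<in> C1 \<and> B' \<in> C1 \<and> {blk B, blk B'} \<in> H23} = lift_edges H23"
proof
  show "lift_edges {{B, B'} | B B'. B \<in> C1 \<and> B' \<in> C1 \<and> {blk B, blk B'} \<in> H23} \<subseteq> lift_edges H23"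
  proof
    fix e assume "e \<in> lift_edges {{B, B'} | B B'. B \<in> C1 \<and> B' \<in> C1 \<and> {blk B, blk B'} \<in> H23}"
    then obtain x y X Y where e: "e = {x, y}" and XY0: "{X, Y} \<in> {{B, B'} | B B'. B \<in> C1 \<and> B' \<in> C1 \<and> {blk B, blk B'} \<in> H23}"
      and x: "x \<in> X" and y: "y \<in> Y"
      by (rule lift_edgesE)
    then obtain B B' where XY: "{X, Y} = {B, B'}" and BB: "B \<in> C1" "B' \<in> C1" "{blk B, blk B'} \<in> H23"
      by blast
    from XY have "(X = B \<and> Y = B') \<or> (X = B' \<and> Y = B)" by (simp add: doubleton_eq_iff)
    thus "e \<in> lift_edges H23"
    proof
      assume a: "X = B \<and> Y = B'"
      have "x \<in> blk B" "y \<in> blk B'" using a x y blk[OF BB(1)] blk[OF BB(2)] by auto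
      thus ?thesis unfolding e using BB(3) by (intro lift_edgesI)
    next
      assume a: "X = B' \<and> Y = B"
      have "x \<in> blk B'" "y \<in> blk B" using a x y blk[OF BB(1)] blk[OF BB(2)] by auto
      moreover have "{blk B', blk B} \<in> H23" using BB(3) by (simp add: insert_commute)
      ultimately show ?thesis unfolding e by (intro lift_edgesI)
    qed
  qed
next
  show "lift_edges H23 \<subseteq> lift_edges {{B, B'} | B B'. B \<in> C1 \<and> B' \<in> C1 \<and> {blk B, blk B'} \<in> H23}"
  proof
    fix e assume "e \<in> lift_edges H23"
    then obtain x y J J' where e: "e = {x, y}" and h: "{J, J'} \<in> H23" and x: "x \<in> J" and y: "y \<in> J'"
      by (rule lift_edgesE)
    have JJ: "J \<in> C2" "J' \<in> C2" using sgH[OF H23 h] by auto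
    have xV: "x \<in> V" using comp_sub[OF JJ(1)] x by auto
    have yV: "y \<in> V" using comp_sub[OF JJ(2)] y by auto
    obtain B where B: "B \<in> C1" "x \<in> B" using comp_exists[OF xV] by blast
    obtain B' where B': "B' \<in> C1" "y \<in> B'" using comp_exists[OF yV] by blast
    have "blk B = J" using comp_uniq[OF conjunct1[OF blk[OF B(1)]] JJ(1) _ x] blk[OF B(1)] B(2) by auto
    moreover have "blk B' = J'" using comp_uniq[OF conjunct1[OF blk[OF B'(1)]] JJ(2) _ y] blk[OF B'(1)] B'(2) by auto
    ultimately have "{B, B'} \<in> {{B, B'} | B B'. B \<in> C1 \<and> B' \<in> C1 \<and> {blk B, blk B'} \<in> H23}"
      using B B' h by blast
    thus "e \<in> lift_edges {{B, B'} | B B'. B \<in> C1 \<and> B' \<in> C1 \<and> {blk B, blk B'} \<in> H23}"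
      unfolding e using B(2) B'(2) by (intro lift_edgesI)
  qed
qed

lemma e3': "E3 = E1 \<union> lift_edges H13"
proof -
  have l: "lift_edges H13 = lift_edges H12 \<union> lift_edges H23"
    unfolding H13_def lift_Un lift_H13' ..
  have "E3 = (E1 \<union> lift_edges H12) \<union> lift_edges H23" using e3 e2 by simp
  thus ?thesis unfolding l by auto
qed

lemma divides13: "divides V E1 E3"
  unfolding divides_def using H13_simple e3' by blast

lemma quot13: "quot V E1 E3 = H13"
  unfolding e3' by (rule quot_eq[OF sg1 H13_simple])

lemma quot23: "quot V E2 E3 = H23"
  unfolding e3 by (rule quot_eq[OF sg2 H23])

lemma d12: "B \<in> C1 \<Longrightarrow> v \<in> B \<Longrightarrow> degree E2 v = degree E1 v + nbsize C1 H12 B"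
  unfolding e2 by (rule deg_lift[OF sg1 H12])

lemma d13: "B \<in> C1 \<Longrightarrow> v \<in> B \<Longrightarrow> degree E3 v = degree E1 v + nbsize C1 H13 B"
  unfolding e3' by (rule deg_lift[OF sg1 H13_simple])

lemma d23: "J \<in> C2 \<Longrightarrow> v \<in> J \<Longrightarrow> degree E3 v = degree E2 v + nbsize C2 H23 J"
  unfolding e3 by (rule deg_lift[OF sg2 H23])

lemma reg_deg:
  assumes rc: "regular_components V E" and B: "B \<in> components V E" and v: "v \<in> B"
  shows "reg E B = degree E v"
proof -
  obtain r where r: "\<forall>v\<in>B. degree E v = r" using rc B unfolding regular_components_def by blast
  have "(SOME v. v \<in> B) \<in> B" using comp_ne[OF B] by (simp add: some_in_eq)
  thus ?thesis unfolding reg_def using r v by simp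
qed

lemma some_in: "B \<in> components V E \<Longrightarrow> (SOME v. v \<in> B) \<in> B"
  using comp_ne by (simp add: some_in_eq)

lemma K1: "B \<in> C1 \<Longrightarrow> reg E2 (blk B) = reg E1 B + nbsize C1 H12 B"
proof -
  assume B: "B \<in> C1"
  let ?v = "SOME v. v \<in> B"
  have v: "?v \<in> B" by (rule some_in[OF B])
  have "reg E2 (blk B) = degree E2 ?v" using reg_deg[OF rc2 conjunct1[OF blk[OF B]]] v blk[OF B] by auto
  also have "\<dots> = degree E1 ?v + nbsize C1 H12 B" by (rule d12[OF B v])
  also have "degree E1 ?v = reg E1 B" using reg_deg[OF rc1 B v] by simp
  finally show ?thesis .
qed

lemma K2: "B \<in> C1 \<Longrightarrow> reg E1 B + nbsize C1 H13 B = reg E2 (blk B) + nbsize C2 H23 (blk B)"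
proof -
  assume B: "B \<in> C1"
  let ?v = "SOME v. v \<in> B"
  have v: "?v \<in> B" by (rule some_in[OF B])
  have vJ: "?v \<in> blk B" using v blk[OF B] by auto
  have "reg E1 B + nbsize C1 H13 B = degree E3 ?v" using d13[OF B v] reg_deg[OF rc1 B v] by simp
  also have "\<dots> = degree E2 ?v + nbsize C2 H23 (blk B)" by (rule d23[OF conjunct1[OF blk[OF B]] vJ])
  also have "degree E2 ?v = reg E2 (blk B)" using reg_deg[OF rc2 conjunct1[OF blk[OF B]] vJ] by simp
  finally show ?thesis .
qed

lemma N1:
  assumes B: "B \<in> C1"
  shows "{B' \<in> C1. B' \<noteq> B \<and> B' \<subseteq> blk B \<and> {B, B'} \<in> H13} = {B' \<in> C1. {B', B} \<in> H12}"
proof (rule equalityI[OF subsetI subsetI])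
  fix B' assume a: "B' \<in> {B' \<in> C1. B' \<noteq> B \<and> B' \<subseteq> blk B \<and> {B, B'} \<in> H13}"
  hence B': "B' \<in> C1" and ne: "B' \<noteq> B" and sub: "B' \<subseteq> blk B" and h: "{B, B'} \<in> H13" by auto
  have bb: "blk B' = blk B" by (rule blk_eq[OF B' conjunct1[OF blk[OF B]] sub])
  have "{blk B, blk B'} \<notin> H23" using sgH[OF H23, of "blk B" "blk B"] bb by auto
  hence "{B, B'} \<in> H12" using H13_iff[OF B B'] h by auto
  thus "B' \<in> {B' \<in> C1. {B', B} \<in> H12}" using B' by (simp add: insert_commute)
next
  fix B' assume a: "B' \<in> {B' \<in> C1. {B', B} \<in> H12}"
  hence B': "B' \<in> C1" and h: "{B', B} \<in> H12" by auto
  have ne: "B' \<noteq> B" using sgH[OF H12 h] by auto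
  have "blk B' = blk B" by (rule H12_blk[OF h])
  hence sub: "B' \<subseteq> blk B" using blk[OF B'] by auto
  have "{B, B'} \<in> H13" using H13_iff[OF B B'] h by (simp add: insert_commute)
  thus "B' \<in> {B' \<in> C1. B' \<noteq> B \<and> B' \<subseteq> blk B \<and> {B, B'} \<in> H13}" using B' ne sub by simp
qed

lemma N2:
  assumes B: "B \<in> C1" and J: "J \<in> C2" and ne: "J \<noteq> blk B" and h: "{blk B, J} \<in> H23"
  shows "{B' \<in> C1. B' \<noteq> B \<and> B' \<subseteq> J \<and> {B, B'} \<in> H13} = {B' \<in> C1. B' \<subseteq> J}"
proof (rule equalityI[OF subsetI subsetI])
  fix B' assume a: "B' \<in> {B' \<in> C1. B' \<subseteq> J}"
  hence B': "B' \<in> C1" and sub: "B' \<subseteq> J" by auto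
  have bb: "blk B' = J" by (rule blk_eq[OF B' J sub])
  have "B' \<noteq> B" using bb ne by auto
  moreover have "{B, B'} \<in> H13" using H13_iff[OF B B'] h bb by simp
  ultimately show "B' \<in> {B' \<in> C1. B' \<noteq> B \<and> B' \<subseteq> J \<and> {B, B'} \<in> H13}" using B' sub by simp
qed auto

lemma N3:
  assumes B: "B \<in> C1" and J: "J \<in> C2" and ne: "J \<noteq> blk B" and h: "{blk B, J} \<notin> H23"
  shows "{B' \<in> C1. B' \<noteq> B \<and> B' \<subseteq> J \<and> {B, B'} \<in> H13} = {}"
proof (rule equalityI[OF subsetI subsetI])
  fix B' assume a: "B' \<in> {B' \<in> C1. B' \<noteq> B \<and> B' \<subseteq> J \<and> {B, B'} \<in> H13}"
  hence B': "B' \<in> C1" and sub: "B' \<subseteq> J" and h13: "{B, B'} \<in> H13" by auto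
  have bb: "blk B' = J" by (rule blk_eq[OF B' J sub])
  have "{B, B'} \<notin> H12"
  proof
    assume "{B, B'} \<in> H12"
    hence "blk B = blk B'" by (rule H12_blk)
    thus False using bb ne by simp
  qed
  moreover have "{blk B, blk B'} \<notin> H23" using h bb by simp
  ultimately show "B' \<in> {}" using H13_iff[OF B B'] h13 by simp
qed auto

end

definition Wf :: "'a set \<Rightarrow> 'a set \<Rightarrow> real" where
  "Wf B J = (if B \<subseteq> J then sqrt (real (card B) / real (card J)) else 0)"

lemma sq1: "(a::real) \<ge> 0 \<Longrightarrow> b \<ge> 0 \<Longrightarrow> sqrt (a * b) * sqrt (b / c) = b * sqrt (a / c)"
proof -
  assume a: "a \<ge> 0" and b: "b \<ge> 0"
  have "sqrt (a * b) * sqrt (b / c) = sqrt ((b * b) * (a / c))"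
    by (simp add: real_sqrt_mult[symmetric] algebra_simps)
  also have "\<dots> = sqrt (b * b) * sqrt (a / c)" by (rule real_sqrt_mult)
  also have "sqrt (b * b) = b" using b by simp
  finally show ?thesis .
qed

lemma sq2: "(c::real) > 0 \<Longrightarrow> a \<ge> 0 \<Longrightarrow> c * sqrt (a / c) = sqrt (a * c)"
proof -
  assume c: "c > 0" and a: "a \<ge> 0"
  have e: "(c * c) * (a / c) = a * c" using c by (simp add: field_simps)
  have "sqrt (a * c) = sqrt ((c * c) * (a / c))" unfolding e ..
  also have "\<dots> = sqrt (c * c) * sqrt (a / c)" by (rule real_sqrt_mult)
  also have "sqrt (c * c) = c" using c by simp
  finally show ?thesis by simp
qed

lemma sq3: "(b::real) > 0 \<Longrightarrow> sqrt (a / b) * sqrt (b * c) = sqrt (a * c)"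
proof -
  assume b: "b > 0"
  have "sqrt (a / b) * sqrt (b * c) = sqrt (a / b * (b * c))" by (rule real_sqrt_mult[symmetric])
  also have "a / b * (b * c) = a * c" using b by (simp add: field_simps)
  finally show ?thesis .
qed

context asm3
begin

lemma cardpos1: "B \<in> C1 \<Longrightarrow> card B > 0"
  using comp_finite_block[OF sg1] comp_ne by (metis card_gt_0_iff)

lemma cardpos2: "J \<in> C2 \<Longrightarrow> card J > 0"
  using comp_finite_block[OF sg2] comp_ne by (metis card_gt_0_iff)

lemma finC1: "finite C1" by (rule comp_finite[OF sg1])
lemma finC2: "finite C2" by (rule comp_finite[OF sg2])

lemma I1:
  assumes J: "J \<in> C2" and J': "J' \<in> C2"
  shows "(\<Sum>B\<in>C1. Wf B J * Wf B J') = (if J = J' then 1 else 0)"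
proof (cases "J = J'")
  case True
  have "(\<Sum>B\<in>C1. Wf B J * Wf B J') = (\<Sum>B\<in>C1. if B \<subseteq> J then real (card B) / real (card J) else 0)"
    unfolding True Wf_def by (intro sum.cong, auto)
  also have "\<dots> = (\<Sum>B\<in>{B \<in> C1. B \<subseteq> J}. real (card B) / real (card J))"
    by (rule sum.inter_filter[OF finC1, symmetric])
  also have "\<dots> = real (\<Sum>B\<in>{B \<in> C1. B \<subseteq> J}. card B) / real (card J)"
    by (simp add: sum_divide_distrib)
  also have "\<dots> = 1" unfolding refine_card[OF sg1 sub12 J] using cardpos2[OF J] by simp
  finally show ?thesis using True by simp
next
  case False
  have "\<And>B. B \<in> C1 \<Longrightarrow> Wf B J * Wf B J' = 0"
    unfolding Wf_def using refine_uniq[OF _ J J'] False by auto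
  hence "(\<Sum>B\<in>C1. Wf B J * Wf B J') = (\<Sum>B\<in>C1. 0)" by (intro sum.cong refl) 
  thus ?thesis using False by simp
qed

lemma termA:
  assumes B: "B \<in> C1" and B': "B' \<in> C1" and J: "J \<in> C2"
  shows "Aent E1 H13 B B' * Wf B' J =
    (if B' = B then (if B \<subseteq> J then real (reg E1 B) * sqrt (real (card B) / real (card J)) else 0) else 0)
    + (if B' \<noteq> B \<and> B' \<subseteq> J \<and> {B, B'} \<in> H13 then real (card B') * sqrt (real (card B) / real (card J)) else 0)"
proof (cases "B' = B")
  case True
  then show ?thesis unfolding Aent_def Wf_def by simp
next
  case False
  then show ?thesis unfolding Aent_def Wf_def
    using sq1[of "real (card B)" "real (card B')" "real (card J)"] by (auto simp: insert_commute)
qed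

lemma I2:
  assumes B: "B \<in> C1" and J: "J \<in> C2"
  shows "(\<Sum>B'\<in>C1. Aent E1 H13 B B' * Wf B' J) = (\<Sum>J'\<in>C2. Wf B J' * Aent E2 H23 J' J)"
proof -
  let ?s = "sqrt (real (card B) / real (card J))"
  let ?S = "{B' \<in> C1. B' \<noteq> B \<and> B' \<subseteq> J \<and> {B, B'} \<in> H13}"
  have "(\<Sum>B'\<in>C1. Aent E1 H13 B B' * Wf B' J) =
     (\<Sum>B'\<in>C1. (if B' = B then (if B \<subseteq> J then real (reg E1 B) * ?s else 0) else 0))
    + (\<Sum>B'\<in>C1. (if B' \<noteq> B \<and> B' \<subseteq> J \<and> {B, B'} \<in> H13 then real (card B') * ?s else 0))"
    unfolding sum.distrib[symmetric] by (intro sum.cong, auto simp: termA[OF B _ J])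
  also have "(\<Sum>B'\<in>C1. (if B' = B then (if B \<subseteq> J then real (reg E1 B) * ?s else 0) else 0))
      = (if B \<subseteq> J then real (reg E1 B) * ?s else 0)" using B finC1 by simp
  also have "(\<Sum>B'\<in>C1. (if B' \<noteq> B \<and> B' \<subseteq> J \<and> {B, B'} \<in> H13 then real (card B') * ?s else 0))
     = (\<Sum>B'\<in>?S. real (card B') * ?s)" by (rule sum.inter_filter[OF finC1, symmetric])
  also have "\<dots> = (\<Sum>B'\<in>?S. real (card B')) * ?s" by (simp add: sum_distrib_right)
  finally have L: "(\<Sum>B'\<in>C1. Aent E1 H13 B B' * Wf B' J) =
     (if B \<subseteq> J then real (reg E1 B) * ?s else 0) + (\<Sum>B'\<in>?S. real (card B')) * ?s" .
  have bB: "blk B \<in> C2" "B \<subseteq> blk B" using blk[OF B] by auto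
  have "(\<Sum>J'\<in>C2. Wf B J' * Aent E2 H23 J' J) = (\<Sum>J'\<in>C2. if J' = blk B then Wf B (blk B) * Aent E2 H23 (blk B) J else 0)"
  proof (rule sum.cong[OF refl])
    fix J' assume J': "J' \<in> C2"
    show "Wf B J' * Aent E2 H23 J' J = (if J' = blk B then Wf B (blk B) * Aent E2 H23 (blk B) J else 0)"
    proof (cases "J' = blk B")
      case True thus ?thesis by simp
    next
      case False
      hence "\<not> B \<subseteq> J'" using blk_eq[OF B J'] by metis
      thus ?thesis using False unfolding Wf_def by simp
    qed
  qed
  also have "\<dots> = Wf B (blk B) * Aent E2 H23 (blk B) J" using bB finC2 by simp
  finally have R: "(\<Sum>J'\<in>C2. Wf B J' * Aent E2 H23 J' J) = Wf B (blk B) * Aent E2 H23 (blk B) J" .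
  have nB: "real (card B) \<ge> 0" by simp
  have nJ: "real (card J) > 0" using cardpos2[OF J] by simp
  have n0: "real (card (blk B)) > 0" using cardpos2[OF bB(1)] by simp
  show ?thesis
  proof (cases "J = blk B")
    case True
    have S: "?S = {B' \<in> C1. {B', B} \<in> H12}" unfolding True by (rule N1[OF B])
    have sumS: "(\<Sum>B'\<in>?S. real (card B')) = real (nbsize C1 H12 B)"
      unfolding S nbsize_def by simp
    have "(\<Sum>B'\<in>C1. Aent E1 H13 B B' * Wf B' J) = real (reg E1 B) * ?s + real (nbsize C1 H12 B) * ?s"
      unfolding L sumS using bB True by simp
    also have "\<dots> = real (reg E2 J) * ?s" using K1[OF B] True by (simp add: algebra_simps)
    finally have "(\<Sum>B'\<in>C1. Aent E1 H13 B B' * Wf B' J) = real (reg E2 J) * ?s" .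
    moreover have "(\<Sum>J'\<in>C2. Wf B J' * Aent E2 H23 J' J) = real (reg E2 J) * ?s"
    proof -
      have "(\<Sum>J'\<in>C2. Wf B J' * Aent E2 H23 J' J) = Wf B (blk B) * Aent E2 H23 (blk B) J" by (rule R)
      also have "\<dots> = real (reg E2 J) * ?s" using True bB by (simp add: Wf_def Aent_def)
      finally show ?thesis .
    qed
    ultimately show ?thesis by simp
  next
    case False
    have nsub: "\<not> B \<subseteq> J" using blk_eq[OF B J] False by auto
    show ?thesis
    proof (cases "{blk B, J} \<in> H23")
      case True
      have S: "?S = {B' \<in> C1. B' \<subseteq> J}" by (rule N2[OF B J False True])
      have "(\<Sum>B'\<in>?S. real (card B')) = real (card J)"
        unfolding S using refine_card[OF sg1 sub12 J] by (metis of_nat_sum)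
      hence "(\<Sum>B'\<in>C1. Aent E1 H13 B B' * Wf B' J) = sqrt (real (card B) * real (card J))"
        unfolding L using nsub sq2[OF nJ nB] by (simp add: algebra_simps)
      moreover have "(\<Sum>J'\<in>C2. Wf B J' * Aent E2 H23 J' J) = sqrt (real (card B) * real (card J))"
        unfolding R using bB False True sq3[OF n0] by (simp add: Wf_def Aent_def)
      ultimately show ?thesis by simp
    next
      case F2: False
      have S: "?S = {}" by (rule N3[OF B J False F2])
      have "(\<Sum>B'\<in>C1. Aent E1 H13 B B' * Wf B' J) = 0"
        unfolding L S using nsub by simp
      moreover have "(\<Sum>J'\<in>C2. Wf B J' * Aent E2 H23 J' J) = 0"
        unfolding R using False F2 by (simp add: Aent_def)
      ultimately show ?thesis by simp
    qed
  qed
qed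

lemma I3:
  assumes B: "B \<in> C1" and J: "J \<in> C2"
  shows "(\<Sum>B'\<in>C1. Dent E1 H13 C1 B B' * Wf B' J) = (\<Sum>J'\<in>C2. Wf B J' * Dent E2 H23 C2 J' J)"
proof -
  have "(\<Sum>B'\<in>C1. Dent E1 H13 C1 B B' * Wf B' J) = (\<Sum>B'\<in>C1. if B' = B then Dent E1 H13 C1 B B * Wf B J else 0)"
    by (intro sum.cong refl, auto simp: Dent_def)
  also have "\<dots> = Dent E1 H13 C1 B B * Wf B J" using B finC1 by simp
  finally have L: "(\<Sum>B'\<in>C1. Dent E1 H13 C1 B B' * Wf B' J) = Dent E1 H13 C1 B B * Wf B J" .
  have "(\<Sum>J'\<in>C2. Wf B J' * Dent E2 H23 C2 J' J) = (\<Sum>J'\<in>C2. if J' = J then Wf B J * Dent E2 H23 C2 J J else 0)"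
    by (intro sum.cong refl, auto simp: Dent_def)
  also have "\<dots> = Wf B J * Dent E2 H23 C2 J J" using J finC2 by simp
  finally have R: "(\<Sum>J'\<in>C2. Wf B J' * Dent E2 H23 C2 J' J) = Wf B J * Dent E2 H23 C2 J J" .
  show ?thesis
  proof (cases "B \<subseteq> J")
    case True
    have "blk B = J" by (rule blk_eq[OF B J True])
    hence "Dent E1 H13 C1 B B = Dent E2 H23 C2 J J"
      unfolding Dent_def using K2[OF B] by simp
    thus ?thesis unfolding L R by simp
  next
    case False
    hence "Wf B J = 0" by (simp add: Wf_def)
    thus ?thesis unfolding L R by simp
  qed
qed

end

lemma block_list_props: "finite C \<Longrightarrow> distinct (block_list C) \<and> set (block_list C) = C"
  unfolding block_list_def
  by (rule someI_ex) (metis finite_distinct_list)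

lemma sum_bl: "distinct bs \<Longrightarrow> (\<Sum>l<length bs. F (bs ! l)) = (\<Sum>B\<in>set bs. F B)"
  by (rule sum.reindex_bij_betw[OF bij_betw_nth], auto)

lemma mat_mult_entry: "i < n \<Longrightarrow> j < p \<Longrightarrow>
   (mat n m f * mat m p g) $$ (i, j) = (\<Sum>l<m. f (i, l) * g (l, j))"
  by (simp add: scalar_prod_def lessThan_atLeast0)

context asm3
begin

definition "bs1 = block_list C1"
definition "bs2 = block_list C2"
definition "k1 = length bs1"
definition "k2 = length bs2"

lemma bs1: "distinct bs1" "set bs1 = C1" unfolding bs1_def using block_list_props[OF finC1] by auto
lemma bs2: "distinct bs2" "set bs2 = C2" unfolding bs2_def using block_list_props[OF finC2] by auto

lemma bs1_mem: "i < k1 \<Longrightarrow> bs1 ! i \<in> C1" unfolding k1_def using bs1 nth_mem by blast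
lemma bs2_mem: "i < k2 \<Longrightarrow> bs2 ! i \<in> C2" unfolding k2_def using bs2 nth_mem by blast

lemma sum1: "(\<Sum>l<k1. F (bs1 ! l)) = (\<Sum>B\<in>C1. F B)"
  unfolding k1_def using sum_bl[OF bs1(1), of F] bs1(2) by simp
lemma sum2: "(\<Sum>l<k2. F (bs2 ! l)) = (\<Sum>B\<in>C2. F B)"
  unfolding k2_def using sum_bl[OF bs2(1), of F] bs2(2) by simp

definition "Wm = mat k1 k2 (\<lambda>(i, j). Wf (bs1 ! i) (bs2 ! j))"
definition "Lm = mat k2 k1 (\<lambda>(i, j). Wf (bs1 ! j) (bs2 ! i))"
definition "A1m = mat k1 k1 (\<lambda>(i, j). Aent E1 H13 (bs1 ! i) (bs1 ! j))"
definition "D1m = mat k1 k1 (\<lambda>(i, j). Dent E1 H13 C1 (bs1 ! i) (bs1 ! j))"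
definition "A2m = mat k2 k2 (\<lambda>(i, j). Aent E2 H23 (bs2 ! i) (bs2 ! j))"
definition "D2m = mat k2 k2 (\<lambda>(i, j). Dent E2 H23 C2 (bs2 ! i) (bs2 ! j))"

lemma AW: "A1m * Wm = Wm * A2m"
proof (rule eq_matI)
  fix i j assume "i < dim_row (Wm * A2m)" "j < dim_col (Wm * A2m)"
  hence i: "i < k1" and j: "j < k2" by (auto simp: Wm_def A2m_def)
  have "(A1m * Wm) $$ (i, j) = (\<Sum>l<k1. Aent E1 H13 (bs1 ! i) (bs1 ! l) * Wf (bs1 ! l) (bs2 ! j))"
    unfolding A1m_def Wm_def using i j by (simp add: scalar_prod_def lessThan_atLeast0)
  also have "\<dots> = (\<Sum>B'\<in>C1. Aent E1 H13 (bs1 ! i) B' * Wf B' (bs2 ! j))" by (rule sum1)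
  also have "\<dots> = (\<Sum>J'\<in>C2. Wf (bs1 ! i) J' * Aent E2 H23 J' (bs2 ! j))"
    by (rule I2[OF bs1_mem[OF i] bs2_mem[OF j]])
  also have "\<dots> = (\<Sum>l<k2. Wf (bs1 ! i) (bs2 ! l) * Aent E2 H23 (bs2 ! l) (bs2 ! j))" by (rule sum2[symmetric])
  also have "\<dots> = (Wm * A2m) $$ (i, j)"
    unfolding A2m_def Wm_def using i j by (simp add: scalar_prod_def lessThan_atLeast0)
  finally show "(A1m * Wm) $$ (i, j) = (Wm * A2m) $$ (i, j)" .
qed (auto simp: Wm_def A1m_def A2m_def)

lemma DW: "D1m * Wm = Wm * D2m"
proof (rule eq_matI)
  fix i j assume "i < dim_row (Wm * D2m)" "j < dim_col (Wm * D2m)"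
  hence i: "i < k1" and j: "j < k2" by (auto simp: Wm_def D2m_def)
  have "(D1m * Wm) $$ (i, j) = (\<Sum>l<k1. Dent E1 H13 C1 (bs1 ! i) (bs1 ! l) * Wf (bs1 ! l) (bs2 ! j))"
    unfolding D1m_def Wm_def using i j by (simp add: scalar_prod_def lessThan_atLeast0)
  also have "\<dots> = (\<Sum>B'\<in>C1. Dent E1 H13 C1 (bs1 ! i) B' * Wf B' (bs2 ! j))" by (rule sum1)
  also have "\<dots> = (\<Sum>J'\<in>C2. Wf (bs1 ! i) J' * Dent E2 H23 C2 J' (bs2 ! j))"
    by (rule I3[OF bs1_mem[OF i] bs2_mem[OF j]])
  also have "\<dots> = (\<Sum>l<k2. Wf (bs1 ! i) (bs2 ! l) * Dent E2 H23 C2 (bs2 ! l) (bs2 ! j))" by (rule sum2[symmetric])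
  also have "\<dots> = (Wm * D2m) $$ (i, j)"
    unfolding D2m_def Wm_def using i j by (simp add: scalar_prod_def lessThan_atLeast0)
  finally show "(D1m * Wm) $$ (i, j) = (Wm * D2m) $$ (i, j)" .
qed (auto simp: Wm_def D1m_def D2m_def)

lemma LW: "Lm * Wm = 1\<^sub>m k2"
proof (rule eq_matI)
  fix i j assume "i < dim_row (1\<^sub>m k2 :: real mat)" "j < dim_col (1\<^sub>m k2 :: real mat)"
  hence i: "i < k2" and j: "j < k2" by auto
  have "(Lm * Wm) $$ (i, j) = (\<Sum>l<k1. Wf (bs1 ! l) (bs2 ! i) * Wf (bs1 ! l) (bs2 ! j))"
    unfolding Lm_def Wm_def using i j by (simp add: scalar_prod_def lessThan_atLeast0)
  also have "\<dots> = (\<Sum>B\<in>C1. Wf B (bs2 ! i) * Wf B (bs2 ! j))" by (rule sum1)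
  also have "\<dots> = (if bs2 ! i = bs2 ! j then 1 else 0)" by (rule I1[OF bs2_mem[OF i] bs2_mem[OF j]])
  also have "\<dots> = (if i = j then 1 else 0)" using nth_eq_iff_index_eq[OF bs2(1)] i j unfolding k2_def by simp
  finally show "(Lm * Wm) $$ (i, j) = (1\<^sub>m k2) $$ (i, j)" using i j by simp
qed (auto simp: Wm_def Lm_def)

lemma phi1: "phi V E1 H13 = det (CM k1 A1m D1m)"
  unfolding phi_def Let_def bs1_def[symmetric] k1_def[symmetric]
  by (rule arg_cong[of _ _ det], rule eq_matI, auto simp: CM_def A1m_def D1m_def)

lemma phi2: "phi V E2 H23 = det (CM k2 A2m D2m)"
  unfolding phi_def Let_def bs2_def[symmetric] k2_def[symmetric]
  by (rule arg_cong[of _ _ det], rule eq_matI, auto simp: CM_def A2m_def D2m_def)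

lemma phi_dvd: "phi V E2 H23 dvd phi V E1 H13"
proof -
  have Wc: "Wm \<in> carrier_mat k1 k2" by (simp add: Wm_def)
  have Lc: "Lm \<in> carrier_mat k2 k1" by (simp add: Lm_def)
  have "map_mat cst Lm * map_mat cst Wm = map_mat cst (Lm * Wm)"
    by (rule semiring_hom.mat_hom_mult[OF cst_hom Lc Wc, symmetric])
  also have "\<dots> = 1\<^sub>m k2" unfolding LW by (rule semiring_hom.mat_hom_one[OF cst_hom])
  finally have LW': "map_mat cst Lm * map_mat cst Wm = 1\<^sub>m k2" .
  have MW: "CM k1 A1m D1m * map_mat cst Wm = map_mat cst Wm * CM k2 A2m D2m"
    by (rule CM_intertwine[OF _ _ _ _ Wc AW DW], auto simp: A1m_def D1m_def A2m_def D2m_def)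
  show ?thesis unfolding phi1 phi2
    by (rule core_dvd[OF CM_carrier CM_carrier _ _ LW' MW], insert Wc Lc, auto)
qed

end

theorem mainTheorem9:
  fixes V :: "'a set" and E1 E2 E3 :: "'a set set"
  assumes "simple_graph V E1" and "simple_graph V E2" and "simple_graph V E3"
    and "regular_components V E1" and "regular_components V E2"
    and "divides V E1 E2" and "divides V E2 E3"
  shows "divides V E1 E3 \<and> phi V E2 (quot V E2 E3) dvd phi V E1 (quot V E1 E3)"
proof -
  obtain H12 where H12: "simple_graph (components V E1) H12" "E2 = E1 \<union> lift_edges H12"
    using assms(6) unfolding divides_def by blast
  obtain H23 where H23: "simple_graph (components V E2) H23" "E3 = E2 \<union> lift_edges H23"
    using assms(7) unfolding divides_def by blast
  interpret a: asm3 V E1 E2 E3 H12 H23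
    using assms H12 H23 by (unfold_locales, auto)
  show ?thesis using a.divides13 a.phi_dvd unfolding a.quot13 a.quot23 by simp
qed

end
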